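(* Let $G=(V,E)$ be a graph with square $G^2=(V,E^2)$, and let $\sigma=(v_1,\ldots,v_n)$ be a maximum neighborhood ordering of $G$ such that for all $1\le i<n$, $m_i$ is a maximum neighbor of $v_i$ in $G_{\sigma,i}$ with $v_i\neq m_i$. If $1\le i<j\le n$ and $m_i\neq v_j$, then $v_iv_j\in E^2$ if and only if $m_iv_j\in E$.
   Context: All graphs are finite, simple and undirected; $N[v]$ denotes the closed neighborhood of $v$. The square $G^2=(V,E^2)$ has distinct $u,v$ adjacent iff $uv\in E$ or $u,v$ have a common neighbor in $G$. For a total ordering $\sigma=(v_1,\ldots,v_n)$ of $V$, $G_{\sigma,i}$ is the subgraph of $G$ induced by $\{v_i,\ldots,v_n\}$. In a graph $H$, a vertex $u\in N_H[v]$ is a maximum neighbor of $v$ if $N_H[x]\subseteq N_H[u]$ for all $x\in N_H[v]$. An ordering $\sigma$ is a maximum neighborhood ordering of $G$ if for every $i$, $v_i$ has a maximum neighbor in $G_{\sigma,i}$. *)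

theory Defs
  imports Main
begin

definition graph :: "'a set \<Rightarrow> ('a \<Rightarrow> 'a \<Rightarrow> bool) \<Rightarrow> bool" where
  "graph V E \<longleftrightarrow> finite V \<and> (\<forall>u v. E u v \<longrightarrow> u \<in> V \<and> v \<in> V)
     \<and> (\<forall>u v. E u v \<longrightarrow> E v u) \<and> (\<forall>v. \<not> E v v)"

definition cnbh :: "'a set \<Rightarrow> ('a \<Rightarrow> 'a \<Rightarrow> bool) \<Rightarrow> 'a \<Rightarrow> 'a set" where
  "cnbh S E v = {u \<in> S. u = v \<or> E v u}"

definition max_neighbor :: "'a set \<Rightarrow> ('a \<Rightarrow> 'a \<Rightarrow> bool) \<Rightarrow> 'a \<Rightarrow> 'a \<Rightarrow> bool" where
  "max_neighbor S E v u \<longleftrightarrow> u \<in> cnbh S E v \<and> (\<forall>x \<in> cnbh S E v. cnbh S E x \<subseteq> cnbh S E u)"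

text \<open>Vertex set of G_{sigma,i}; indices are 0-based (list index i = paper index i+1).\<close>
definition Gsigma :: "'a list \<Rightarrow> nat \<Rightarrow> 'a set" where
  "Gsigma \<sigma> i = set (drop i \<sigma>)"

definition max_nbh_ordering :: "'a set \<Rightarrow> ('a \<Rightarrow> 'a \<Rightarrow> bool) \<Rightarrow> 'a list \<Rightarrow> bool" where
  "max_nbh_ordering V E \<sigma> \<longleftrightarrow> distinct \<sigma> \<and> set \<sigma> = V \<and>
     (\<forall>i < length \<sigma>. \<exists>u. max_neighbor (Gsigma \<sigma> i) E (\<sigma> ! i) u)"

definition sq_adj :: "('a \<Rightarrow> 'a \<Rightarrow> bool) \<Rightarrow> 'a \<Rightarrow> 'a \<Rightarrow> bool" where
  "sq_adj E u v \<longleftrightarrow> u \<noteq> v \<and> (E u v \<or> (\<exists>w. E u w \<and> E w v))"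

end

theory Submission
  imports Defs
begin

lemma in_drop_idx:
  assumes "u \<in> set (drop k xs)"
  shows "\<exists>k'. k \<le> k' \<and> k' < length xs \<and> u = xs ! k'"
proof -
  from assms obtain t where "t < length (drop k xs)" "u = drop k xs ! t"
    by (auto simp: in_set_conv_nth)
  then show ?thesis by (intro exI[of _ "k + t"]) auto
qed

lemma nth_in_drop:
  assumes "k \<le> k'" "k' < length xs"
  shows "xs ! k' \<in> set (drop k xs)"
proof -
  have "drop k xs ! (k' - k) = xs ! k'" using assms by simp
  moreover have "k' - k < length (drop k xs)" using assms by simp
  ultimately show ?thesis by (metis nth_mem)
qed

lemma common_nb:
  assumes g: "graph V E"
    and mno: "max_nbh_ordering V E \<sigma>"
    and mm: "\<forall>k. k + 1 < length \<sigma> \<longrightarrow> max_neighbor (Gsigma \<sigma> k) E (\<sigma> ! k) (m k) \<and> \<sigma> ! k \<noteq> m k"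
    and i: "i < length \<sigma>"
    and a: "a \<in> Gsigma \<sigma> i" and b: "b \<in> Gsigma \<sigma> i" and ab: "a \<noteq> b"
  shows "k < length \<sigma> \<Longrightarrow> E a (\<sigma> ! k) \<Longrightarrow> E (\<sigma> ! k) b \<Longrightarrow>
     E a b \<or> (\<exists>w \<in> Gsigma \<sigma> i. E a w \<and> E w b)"
proof (induction "i - k" arbitrary: k rule: less_induct)
  case less
  have sym: "\<And>u v. E u v \<Longrightarrow> E v u" and irr: "\<And>v. \<not> E v v"
    using g unfolding graph_def by auto
  show ?case
  proof (cases "i \<le> k")
    case True
    then have "\<sigma> ! k \<in> Gsigma \<sigma> i" using less.prems
      unfolding Gsigma_def by (simp add: nth_in_drop)
    then show ?thesis using less.prems by blast
  next
    case False
    then have kk: "k + 1 < length \<sigma>" using i by auto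
    define u where "u = m k"
    have mx: "max_neighbor (Gsigma \<sigma> k) E (\<sigma> ! k) u" and ne: "\<sigma> ! k \<noteq> u"
      using mm kk unfolding u_def by auto
    have sub: "Gsigma \<sigma> i \<subseteq> Gsigma \<sigma> k" using False unfolding Gsigma_def
      by (intro set_drop_subset_set_drop) simp
    have aK: "a \<in> cnbh (Gsigma \<sigma> k) E (\<sigma> ! k)" using a sub less.prems sym
      unfolding cnbh_def by auto
    have bK: "b \<in> cnbh (Gsigma \<sigma> k) E (\<sigma> ! k)" using b sub less.prems
      unfolding cnbh_def by auto
    have au: "a \<in> cnbh (Gsigma \<sigma> k) E u" using mx aK a sub
      unfolding max_neighbor_def cnbh_def by blast
    have bu: "b \<in> cnbh (Gsigma \<sigma> k) E u" using mx bK b sub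
      unfolding max_neighbor_def cnbh_def by blast
    have uK: "u \<in> Gsigma \<sigma> k" using mx unfolding max_neighbor_def cnbh_def by auto
    show ?thesis
    proof (cases "u = a \<or> u = b")
      case True
      then show ?thesis using au bu ab sym unfolding cnbh_def by auto
    next
      case F2: False
      have E1: "E a u" "E u b" using au bu F2 sym unfolding cnbh_def by auto
      obtain k' where k': "k \<le> k'" "k' < length \<sigma>" "u = \<sigma> ! k'"
        using uK in_drop_idx unfolding Gsigma_def by metis
      have "k' \<noteq> k" using ne k' by auto
      then have "i - k' < i - k" using k' False by auto
      then show ?thesis using less.hyps[of k'] k' E1 by auto
    qed
  qed
qed

theorem lemma7:
  fixes V :: "'a set" and E :: "'a \<Rightarrow> 'a \<Rightarrow> bool" and \<sigma> :: "'a list" and m :: "nat \<Rightarrow> 'a"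
  assumes "graph V E"
    and "max_nbh_ordering V E \<sigma>"
    and "\<forall>k. k + 1 < length \<sigma> \<longrightarrow> max_neighbor (Gsigma \<sigma> k) E (\<sigma> ! k) (m k) \<and> \<sigma> ! k \<noteq> m k"
    and "i < j" and "j < length \<sigma>"
    and "m i \<noteq> \<sigma> ! j"
  shows "sq_adj E (\<sigma> ! i) (\<sigma> ! j) \<longleftrightarrow> E (m i) (\<sigma> ! j)"
proof -
  have sym: "\<And>u v. E u v \<Longrightarrow> E v u" and irr: "\<And>v. \<not> E v v"
    and inV: "\<And>u v. E u v \<Longrightarrow> u \<in> V"
    using assms(1) unfolding graph_def by auto
  have dist: "distinct \<sigma>" and setV: "set \<sigma> = V" using assms(2) unfolding max_nbh_ordering_def by auto
  have ij: "\<sigma> ! i \<noteq> \<sigma> ! j" using dist assms(4,5) by (simp add: nth_eq_iff_index_eq)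
  have mx: "max_neighbor (Gsigma \<sigma> i) E (\<sigma> ! i) (m i)" and ne: "\<sigma> ! i \<noteq> m i"
    using assms(3-5) by auto
  have ai: "\<sigma> ! i \<in> Gsigma \<sigma> i" using assms(4,5) unfolding Gsigma_def
    by (intro nth_in_drop) auto
  have bi: "\<sigma> ! j \<in> Gsigma \<sigma> i" using assms(4,5) unfolding Gsigma_def
    by (intro nth_in_drop) auto
  have key: "E (m i) (\<sigma> ! j)" if "x \<in> Gsigma \<sigma> i" "x = \<sigma> ! i \<or> E (\<sigma> ! i) x"
      "\<sigma> ! j = x \<or> E x (\<sigma> ! j)" for x
  proof -
    have "x \<in> cnbh (Gsigma \<sigma> i) E (\<sigma> ! i)" using that unfolding cnbh_def by auto
    then have "cnbh (Gsigma \<sigma> i) E x \<subseteq> cnbh (Gsigma \<sigma> i) E (m i)"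
      using mx unfolding max_neighbor_def by blast
    moreover have "\<sigma> ! j \<in> cnbh (Gsigma \<sigma> i) E x" using that bi unfolding cnbh_def by auto
    ultimately show ?thesis using assms(6) sym unfolding cnbh_def by auto
  qed
  show ?thesis
  proof
    assume "sq_adj E (\<sigma> ! i) (\<sigma> ! j)"
    then have "E (\<sigma> ! i) (\<sigma> ! j) \<or> (\<exists>w. E (\<sigma> ! i) w \<and> E w (\<sigma> ! j))"
      unfolding sq_adj_def by auto
    then show "E (m i) (\<sigma> ! j)"
    proof
      assume "E (\<sigma> ! i) (\<sigma> ! j)"
      then show ?thesis using key[of "\<sigma> ! j"] bi by auto
    next
      assume "\<exists>w. E (\<sigma> ! i) w \<and> E w (\<sigma> ! j)"
      then obtain w where w: "E (\<sigma> ! i) w" "E w (\<sigma> ! j)" by blast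
      then have "w \<in> set \<sigma>" using inV setV by auto
      then obtain k where k: "k < length \<sigma>" "w = \<sigma> ! k" by (auto simp: in_set_conv_nth)
      have "E (\<sigma> ! i) (\<sigma> ! j) \<or> (\<exists>w \<in> Gsigma \<sigma> i. E (\<sigma> ! i) w \<and> E w (\<sigma> ! j))"
        using common_nb[OF assms(1,2,3), of i "\<sigma> ! i" "\<sigma> ! j" k] assms(4,5) ai bi ij k w by auto
      then show ?thesis using key[of "\<sigma> ! j"] key bi by blast
    qed
  next
    assume h: "E (m i) (\<sigma> ! j)"
    have "m i \<in> cnbh (Gsigma \<sigma> i) E (\<sigma> ! i)" using mx unfolding max_neighbor_def by auto
    then have "E (\<sigma> ! i) (m i)" using ne unfolding cnbh_def by auto
    then show "sq_adj E (\<sigma> ! i) (\<sigma> ! j)" using h ij unfolding sq_adj_def by auto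
  qed
qed

end
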